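(* In any execution of $\mathtt{search}(\mathcal{G},T)$ (defined in the context), let $\mathcal{G}'$ be the current subgame with top priority $p$, $\alpha\equiv p\pmod 2$, and let $(Z,\sigma)=\mathit{TAttr}^{\mathcal{G}',T'}_\alpha(\mathrm{pr}^{-1}(p)\cap V')$ be the computed region and strategy. Then from every vertex $v\in Z$, player $\overline{\alpha}$ can reach a vertex of priority $p$ via a path in $\mathcal{G}'$ that lies entirely in $Z$ and is consistent with $\sigma$.
   Context: Parity games: $\mathcal{G}=(V_0,V_1,E,\mathrm{pr})$, $V=V_0\cup V_1$ finite, partitioned into vertices of Even ($0$) and Odd ($1$); $E\subseteq V\times V$ with every vertex having a successor; $\mathrm{pr}:V\to\{0,\dots,d\}$. $E(u)=\{v:(u,v)\in E\}$, $\mathrm{pr}(U)=\max_{u\in U}\mathrm{pr}(u)$, $\mathrm{pr}^{-1}(p)$ the set of vertices of priority $p$, $\overline{\alpha}=1-\alpha$. A cycle is won by $\alpha$ if its highest priority has parity $\alpha$. A strategy of $\alpha$ is a partial function $\sigma$ on $V_\alpha$ with $\sigma(v)\in E(v)$; a path is consistent with $\sigma$ if every vertex $v\in\mathrm{dom}(\sigma)$ on it (other than the last) is followed by $\sigma(v)$. For $U\subseteq V$, $\mathcal{G}\cap U$ is the subgame with vertices $V\cap U$ and edges $E\cap(U\times U)$, and $\mathcal{G}\setminus U=\mathcal{G}\cap(V\setminus U)$. A $p$-tangle is a nonempty $U\subseteq V$ with $p=\mathrm{pr}(U)$ such that for $\alpha\equiv p\pmod 2$ there is a strategy $\sigma:U\cap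 V_\alpha\to U$ (witness strategy $\sigma_T(U)$) with $(U,E\cap(\sigma\cup((U\cap V_{\overline{\alpha}})\times U)))$ strongly connected and all its cycles won by $\alpha$ ("won by $\alpha$"). For a tangle $t$ won by $\alpha$ in a game with edge set $E$, $E_T(t)=\{v\notin t:\exists u\in t\cap V_{\overline{\alpha}},(u,v)\in E\}$. $T_\alpha$ denotes the tangles of $T$ won by $\alpha$; for a subgame $\mathcal{G}'$, $T\cap\mathcal{G}'$ denotes the tangles of $T$ contained in its vertex set. Tangle attractor: for a game $\mathcal{G}$ with vertices $V$, tangles $T$, player $\alpha$ and $A\subseteq V$, $\mathit{TAttr}^{\mathcal{G},T}_\alpha(A)$ is the least $Z\supseteq A$ containing every $v\in V_\alpha$ with $E(v)\cap Z\neq\emptyset$, every $v\in V_{\overline{\alpha}}$ with $E(v)\subseteq Z$, and every vertex of every $t\in T_\alpha$ with $\emptyset\neq E_T(t)\subseteq Z$ ($E_T$ computed in $\mathcal{G}$). It is computed iteratively together with a strategy $\sigma$ of $\alpha$ (initially empty): when an $\alpha$-vertex is added individually, $\sigma$ maps it to a successor already in $Z$; each $\alpha$-vertex of $A$ gets as $\sigma$-value a successor in $Z$ once one exists; when the vertices of a tangle $t$ are added, $\sigma(u):=\sigma_T(t)(u)$ for every $\alpha$-vertex $u\in t$ not yet in $\mathrm{dom}(\sigma)$. extract-tangles$(Z,\sigma)$, for a subgame $\mathcal{G}'=(V',E')$ with top priority $p$, $\alpha\equiv p$, region $Z\subseteq V'$ and strategy $\sigma$: let $Y$ be the greatest $X\subseteq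 Z$ such that every $v\in X\cap V_{\overline{\alpha}}$ has $E'(v)\subseteq X$ and every $v\in X\cap V_\alpha$ has $\sigma(v)\in X$; let $H$ be the graph on $Y$ with edges $(v,\sigma(v))$ for $v\in Y\cap V_\alpha$ and $(v,w)\in E'$ for $v\in Y\cap V_{\overline{\alpha}}$; return all bottom strongly connected components of $H$ that contain at least one edge of $H$, each with witness strategy $\sigma$ restricted to it. $\mathtt{search}(\mathcal{G},T)$ (with $T$ a set of tangles of $\mathcal{G}$): repeat forever: set $r:=\emptyset$ (a partial function $V\to\mathbb{N}$, the region function) and $Y:=\emptyset$; while $V\setminus\mathrm{dom}(r)\neq\emptyset$: let $\mathcal{G}':=\mathcal{G}\setminus\mathrm{dom}(r)$ with vertex set $V'$, $T':=T\cap\mathcal{G}'$, $p:=\mathrm{pr}(\mathcal{G}')$, $\alpha:=p\bmod 2$; compute $(Z,\sigma):=\mathit{TAttr}^{\mathcal{G}',T'}_\alpha(\mathrm{pr}^{-1}(p)\cap V')$ (the region of priority $p$); let $A:=$ extract-tangles$(Z,\sigma)$; if some $t\in A$ has $E_T(t)=\emptyset$ with $E_T$ computed in the full game $\mathcal{G}$, return $(T\cup Y,t)$; otherwise set $r(v):=p$ for all $v\in Z$ and $Y:=Y\cup A$. After the while-loop, set $T:=T\cup Y$. *)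

theory Defs
  imports Main
begin

record 'v game =
  V0 :: "'v set"
  V1 :: "'v set"
  E  :: "('v \<times> 'v) set"
  pr :: "'v \<Rightarrow> nat"

definition verts :: "('v, 'z) game_scheme \<Rightarrow> 'v set" where
  "verts G = V0 G \<union> V1 G"

text \<open>Vertices owned by player a (0 = Even, 1 = Odd).\<close>
definition owned :: "('v, 'z) game_scheme \<Rightarrow> nat \<Rightarrow> 'v set" where
  "owned G a = (if a = 0 then V0 G else V1 G)"

definition succs :: "('v, 'z) game_scheme \<Rightarrow> 'v \<Rightarrow> 'v set" where
  "succs G u = {v. (u, v) \<in> E G}"

definition prio :: "('v, 'z) game_scheme \<Rightarrow> 'v set \<Rightarrow> nat" where
  "prio G U = Max (pr G ` U)"

definition parity_game :: "'v game \<Rightarrow> bool" where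
  "parity_game G \<longleftrightarrow> finite (verts G) \<and> V0 G \<inter> V1 G = {} \<and>
     E G \<subseteq> verts G \<times> verts G \<and> (\<forall>v \<in> verts G. \<exists>w. (v, w) \<in> E G)"

definition subgame :: "'v game \<Rightarrow> 'v set \<Rightarrow> 'v game" where
  "subgame G U = \<lparr>V0 = V0 G \<inter> U, V1 = V1 G \<inter> U, E = E G \<inter> (U \<times> U), pr = pr G\<rparr>"

text \<open>A tangle is represented together with its witness strategy: a pair (U, sigma).\<close>
type_synonym 'v tangle = "'v set \<times> ('v \<rightharpoonup> 'v)"

definition tangle_winner :: "'v game \<Rightarrow> 'v tangle \<Rightarrow> nat" where
  "tangle_winner G t = prio G (fst t) mod 2"

definition tangle_edges :: "'v game \<Rightarrow> 'v set \<Rightarrow> ('v \<rightharpoonup> 'v) \<Rightarrow> nat \<Rightarrow> ('v \<times> 'v) set" where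
  "tangle_edges G U \<sigma> a = {(u, w). (u, w) \<in> E G \<and>
      ((u \<in> U \<inter> owned G a \<and> \<sigma> u = Some w) \<or> (u \<in> U \<inter> owned G (1 - a) \<and> w \<in> U))}"

definition is_cycle :: "('v \<times> 'v) set \<Rightarrow> 'v list \<Rightarrow> bool" where
  "is_cycle R cs \<longleftrightarrow> cs \<noteq> [] \<and> (\<forall>i < length cs - 1. (cs ! i, cs ! Suc i) \<in> R) \<and>
     (last cs, hd cs) \<in> R"

definition is_tangle :: "'v game \<Rightarrow> 'v tangle \<Rightarrow> bool" where
  "is_tangle G t \<longleftrightarrow> (let U = fst t; \<sigma> = snd t; a = prio G U mod 2 in
     U \<noteq> {} \<and> U \<subseteq> verts G \<and>
     dom \<sigma> = U \<inter> owned G a \<and>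
     (\<forall>u w. \<sigma> u = Some w \<longrightarrow> w \<in> U \<and> (u, w) \<in> E G) \<and>
     (\<forall>u \<in> U. \<forall>w \<in> U. (u, w) \<in> (tangle_edges G U \<sigma> a)\<^sup>*) \<and>
     (\<forall>cs. is_cycle (tangle_edges G U \<sigma> a) cs \<longrightarrow> prio G (set cs) mod 2 = a))"

definition escapes :: "'v game \<Rightarrow> 'v tangle \<Rightarrow> 'v set" where
  "escapes G t = {v. v \<notin> fst t \<and>
     (\<exists>u \<in> fst t \<inter> owned G (1 - tangle_winner G t). (u, v) \<in> E G)}"

definition upd_A :: "'v game \<Rightarrow> nat \<Rightarrow> 'v set \<Rightarrow> 'v set \<Rightarrow> ('v \<rightharpoonup> 'v) \<Rightarrow> ('v \<rightharpoonup> 'v) \<Rightarrow> bool" where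
  "upd_A G a A Z \<sigma> \<sigma>' \<longleftrightarrow> (\<forall>v.
     if v \<in> A \<inter> owned G a \<and> \<sigma> v = None \<and> succs G v \<inter> Z \<noteq> {}
     then (\<exists>w \<in> succs G v \<inter> Z. \<sigma>' v = Some w)
     else \<sigma>' v = \<sigma> v)"

definition tattr_step :: "'v game \<Rightarrow> 'v tangle set \<Rightarrow> nat \<Rightarrow> 'v set \<Rightarrow>
    ('v set \<times> ('v \<rightharpoonup> 'v)) \<Rightarrow> ('v set \<times> ('v \<rightharpoonup> 'v)) \<Rightarrow> bool" where
  "tattr_step G T a A s s' \<longleftrightarrow> (let Z = fst s; \<sigma> = snd s; Z' = fst s'; \<sigma>' = snd s' in
     (\<exists>v w. v \<in> verts G - Z \<and> v \<in> owned G a \<and> w \<in> succs G v \<inter> Z \<and>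
        Z' = insert v Z \<and> upd_A G a A Z' (\<sigma>(v \<mapsto> w)) \<sigma>') \<or>
     (\<exists>v. v \<in> verts G - Z \<and> v \<in> owned G (1 - a) \<and> succs G v \<subseteq> Z \<and>
        Z' = insert v Z \<and> upd_A G a A Z' \<sigma> \<sigma>') \<or>
     (\<exists>t \<in> T. tangle_winner G t = a \<and> \<not> fst t \<subseteq> Z \<and>
        escapes G t \<noteq> {} \<and> escapes G t \<subseteq> Z \<and> Z' = Z \<union> fst t \<and>
        upd_A G a A Z'
          (\<lambda>u. if u \<in> fst t \<inter> owned G a \<and> \<sigma> u = None then snd t u else \<sigma> u) \<sigma>'))"

text \<open>(Z, sigma) is a possible result of computing TAttr^{G,T}_a(A).\<close>
definition tattr_result :: "'v game \<Rightarrow> 'v tangle set \<Rightarrow> nat \<Rightarrow> 'v set \<Rightarrow>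
    'v set \<Rightarrow> ('v \<rightharpoonup> 'v) \<Rightarrow> bool" where
  "tattr_result G T a A Z \<sigma> \<longleftrightarrow> (\<exists>\<sigma>0. upd_A G a A A Map.empty \<sigma>0 \<and>
     (tattr_step G T a A)\<^sup>*\<^sup>* (A, \<sigma>0) (Z, \<sigma>) \<and>
     \<not> (\<exists>s'. tattr_step G T a A (Z, \<sigma>) s'))"

definition closed_region :: "'v game \<Rightarrow> nat \<Rightarrow> 'v set \<Rightarrow> ('v \<rightharpoonup> 'v) \<Rightarrow> 'v set" where
  "closed_region G a Z \<sigma> = gfp (\<lambda>X. {v \<in> Z.
      (v \<in> owned G (1 - a) \<longrightarrow> succs G v \<subseteq> X) \<and>
      (v \<in> owned G a \<longrightarrow> (\<exists>w. \<sigma> v = Some w \<and> w \<in> X))})"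

definition region_graph :: "'v game \<Rightarrow> nat \<Rightarrow> 'v set \<Rightarrow> ('v \<rightharpoonup> 'v) \<Rightarrow> ('v \<times> 'v) set" where
  "region_graph G a Z \<sigma> = {(v, w). v \<in> closed_region G a Z \<sigma> \<and>
      ((v \<in> owned G a \<and> \<sigma> v = Some w) \<or> (v \<in> owned G (1 - a) \<and> (v, w) \<in> E G))}"

definition bottom_scc :: "'v set \<Rightarrow> ('v \<times> 'v) set \<Rightarrow> 'v set \<Rightarrow> bool" where
  "bottom_scc Vs H C \<longleftrightarrow> C \<noteq> {} \<and> C \<subseteq> Vs \<and>
     (\<forall>u \<in> C. \<forall>w \<in> C. (u, w) \<in> H\<^sup>*) \<and>
     (\<forall>u \<in> C. \<forall>w \<in> Vs. (u, w) \<in> H\<^sup>* \<and> (w, u) \<in> H\<^sup>* \<longrightarrow> w \<in> C) \<and>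
     (\<forall>u \<in> C. \<forall>w. (u, w) \<in> H \<longrightarrow> w \<in> C)"

definition extract_tangles :: "'v game \<Rightarrow> nat \<Rightarrow> 'v set \<Rightarrow> ('v \<rightharpoonup> 'v) \<Rightarrow> 'v tangle set" where
  "extract_tangles G a Z \<sigma> = {(C, \<sigma> |` C) | C.
      bottom_scc (closed_region G a Z \<sigma>) (region_graph G a Z \<sigma>) C \<and>
      (\<exists>u \<in> C. \<exists>w \<in> C. (u, w) \<in> region_graph G a Z \<sigma>)}"

text \<open>Search states (T, r, Y). A step is one iteration of the inner while loop that does
  not return, or the end of the while loop (T := T \<union> Y, restart with r, Y empty).\<close>
type_synonym 'v sstate = "'v tangle set \<times> ('v \<rightharpoonup> nat) \<times> 'v tangle set"

definition search_step :: "'v game \<Rightarrow> 'v sstate \<Rightarrow> 'v sstate \<Rightarrow> bool" where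
  "search_step G s s' \<longleftrightarrow> (case s of (T, r, Y) \<Rightarrow>
     (verts G - dom r \<noteq> {} \<and>
       (let G' = subgame G (verts G - dom r);
            T' = {t \<in> T. fst t \<subseteq> verts G'};
            p = prio G (verts G');
            a = p mod 2
        in \<exists>Z \<sigma>. tattr_result G' T' a ({v. pr G v = p} \<inter> verts G') Z \<sigma> \<and>
             \<not> (\<exists>t \<in> extract_tangles G' a Z \<sigma>. escapes G t = {}) \<and>
             s' = (T, (\<lambda>v. if v \<in> Z then Some p else r v), Y \<union> extract_tangles G' a Z \<sigma>)))
     \<or> (verts G - dom r = {} \<and> s' = (T \<union> Y, Map.empty, {})))"

end

theory Submission
  imports Defs
begin

definition tedges :: "'v game \<Rightarrow> 'v tangle \<Rightarrow> ('v \<times> 'v) set" where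
 "tedges G t = {(x,y). (x,y) \<in> E G \<and> x \<in> fst t \<and> y \<in> fst t \<and>
     (x \<in> owned G (prio G (fst t) mod 2) \<longrightarrow> snd t x = Some y)}"

definition tinv :: "'v game \<Rightarrow> 'v tangle \<Rightarrow> bool" where
 "tinv G t \<longleftrightarrow> (\<forall>x y. snd t x = Some y \<longrightarrow> y \<in> fst t \<and> (x,y) \<in> E G) \<and>
    fst t \<inter> owned G (prio G (fst t) mod 2) \<subseteq> dom (snd t) \<and>
    (\<forall>u\<in>fst t. \<forall>w\<in>fst t. (u,w) \<in> (tedges G t)\<^sup>*)"

inductive gp :: "'v game \<Rightarrow> 'v set \<Rightarrow> 'v set \<Rightarrow> ('v \<rightharpoonup> 'v) \<Rightarrow> 'v \<Rightarrow> bool"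
  for G A Z \<sigma> where
  base: "v \<in> A \<Longrightarrow> v \<in> Z \<Longrightarrow> gp G A Z \<sigma> v"
| step: "v \<in> Z \<Longrightarrow> v \<notin> A \<Longrightarrow> (v,w) \<in> E G \<Longrightarrow> (\<forall>w'. \<sigma> v = Some w' \<longrightarrow> w' = w)
     \<Longrightarrow> gp G A Z \<sigma> w \<Longrightarrow> gp G A Z \<sigma> v"

lemma gp_Z: "gp G A Z \<sigma> v \<Longrightarrow> v \<in> Z"
  by (induct rule: gp.induct) auto

lemma gp_mono: "gp G A Z \<sigma> v \<Longrightarrow> Z \<subseteq> Z' \<Longrightarrow> (\<forall>x\<in>Z-A. \<sigma>' x = \<sigma> x) \<Longrightarrow> gp G A Z' \<sigma>' v"
proof (induct rule: gp.induct)
  case (base v) then show ?case by (auto intro: gp.base)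
next
  case (step v w)
  have v1: "v \<in> Z'" using step.prems(1) step.hyps(1) by blast
  have "\<sigma>' v = \<sigma> v" using step.prems(2) step.hyps(1,2) by simp
  then have v2: "\<forall>w'. \<sigma>' v = Some w' \<longrightarrow> w' = w" using step.hyps(4) by simp
  have v3: "gp G A Z' \<sigma>' w" using step.hyps(6) step.prems by simp
  show ?case by (rule gp.step[OF v1 step.hyps(2) step.hyps(3) v2 v3])
qed

lemma gp_list: "gp G A Z \<sigma> v \<Longrightarrow> \<exists>path. path \<noteq> [] \<and> hd path = v \<and> last path \<in> A \<and> set path \<subseteq> Z \<and>
   (\<forall>i<length path - 1. (path!i, path!Suc i) \<in> E G \<and> (\<forall>w. \<sigma> (path!i) = Some w \<longrightarrow> path!Suc i = w))"
proof (induct rule: gp.induct)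
  case (base v) then show ?case by (intro exI[of _ "[v]"]) auto
next
  case (step v w)
  then obtain path where p: "path \<noteq> []" "hd path = w" "last path \<in> A" "set path \<subseteq> Z"
    "\<forall>i<length path - 1. (path!i, path!Suc i) \<in> E G \<and> (\<forall>w. \<sigma> (path!i) = Some w \<longrightarrow> path!Suc i = w)"
    by blast
  have "\<forall>i<length (v#path) - 1. ((v#path)!i, (v#path)!Suc i) \<in> E G \<and>
      (\<forall>w'. \<sigma> ((v#path)!i) = Some w' \<longrightarrow> (v#path)!Suc i = w')"
  proof (intro allI impI)
    fix i assume i: "i < length (v#path) - 1"
    show "((v#path)!i, (v#path)!Suc i) \<in> E G \<and> (\<forall>w'. \<sigma> ((v#path)!i) = Some w' \<longrightarrow> (v#path)!Suc i = w')"
    proof (cases i)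
      case 0
      have "path ! 0 = w" using p(1,2) by (simp add: hd_conv_nth)
      then show ?thesis using 0 step.hyps(3,4) by simp
    next
      case (Suc j)
      have "j < length path - 1" using i Suc by simp
      then show ?thesis using Suc p(5) by simp
    qed
  qed
  moreover have "last (v#path) \<in> A" using p(1,3) by simp
  moreover have "set (v#path) \<subseteq> Z" using p(4) step.hyps(1) by simp
  ultimately show ?case by (intro exI[of _ "v # path"]) simp
qed

lemma owned_sub[simp]: "owned (subgame G U) a = owned G a \<inter> U"
  by (simp add: owned_def subgame_def)
lemma verts_sub[simp]: "verts (subgame G U) = verts G \<inter> U"
  by (auto simp: verts_def subgame_def)
lemma E_sub[simp]: "E (subgame G U) = E G \<inter> (U \<times> U)" by (simp add: subgame_def)
lemma pr_sub[simp]: "pr (subgame G U) = pr G" by (simp add: subgame_def)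
lemma prio_sub[simp]: "prio (subgame G U) X = prio G X" by (simp add: prio_def)
lemma succs_sub[simp]: "succs (subgame G U) v = {w. (v,w) \<in> E G \<and> v \<in> U \<and> w \<in> U}"
  by (auto simp: succs_def)
lemma tw_sub[simp]: "tangle_winner (subgame G U) t = prio G (fst t) mod 2"
  by (simp add: tangle_winner_def)
lemma owned_disj: "V0 G \<inter> V1 G = {} \<Longrightarrow> x \<in> owned G a \<Longrightarrow> x \<in> owned G (1-a) \<Longrightarrow> False"
  by (auto simp: owned_def split: if_splits)
lemma owned_cover: "x \<in> verts G \<Longrightarrow> x \<in> owned G a \<or> x \<in> owned G (1-a)"
  by (auto simp: owned_def verts_def)

lemma upd_A_out: "upd_A G a A Z \<tau> \<sigma>' \<Longrightarrow> v \<notin> A \<Longrightarrow> \<sigma>' v = \<tau> v"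
  unfolding upd_A_def by (erule allE[of _ v]) (auto split: if_splits)
lemma upd_A_some: "upd_A G a A Z \<tau> \<sigma>' \<Longrightarrow> \<sigma>' v = Some w \<Longrightarrow>
    \<tau> v = Some w \<or> (v \<in> A \<inter> owned G a \<and> w \<in> succs G v \<inter> Z)"
  unfolding upd_A_def by (erule allE[of _ v]) (auto split: if_splits)
lemma upd_A_ex: "\<exists>\<sigma>'. upd_A G a A Z \<tau> \<sigma>'"
proof -
  let ?s = "\<lambda>v. if v \<in> A \<inter> owned G a \<and> \<tau> v = None \<and> succs G v \<inter> Z \<noteq> {}
     then Some (SOME w. w \<in> succs G v \<inter> Z) else \<tau> v"
  have "upd_A G a A Z \<tau> ?s" unfolding upd_A_def
  proof (intro allI)
    fix v show "if v \<in> A \<inter> owned G a \<and> \<tau> v = None \<and> succs G v \<inter> Z \<noteq> {}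
     then (\<exists>w \<in> succs G v \<inter> Z. ?s v = Some w) else ?s v = \<tau> v"
    proof (cases "v \<in> A \<inter> owned G a \<and> \<tau> v = None \<and> succs G v \<inter> Z \<noteq> {}")
      case True
      then have "\<exists>w. w \<in> succs G v \<inter> Z" by blast
      then have "(SOME w. w \<in> succs G v \<inter> Z) \<in> succs G v \<inter> Z" by (rule someI_ex)
      with True show ?thesis by auto
    next
      case False then show ?thesis by (simp only: if_not_P[OF False] if_False)
    qed
  qed
  then show ?thesis by blast
qed

definition ainv :: "'v game \<Rightarrow> 'v set \<Rightarrow> 'v set \<Rightarrow> nat \<Rightarrow> 'v set \<Rightarrow> ('v \<rightharpoonup> 'v) \<Rightarrow> bool" where
 "ainv G U A a Z \<sigma> \<longleftrightarrow> A \<subseteq> Z \<and> Z \<subseteq> U \<and> dom \<sigma> \<subseteq> Z \<inter> owned G a \<and>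
   (\<forall>x y. \<sigma> x = Some y \<longrightarrow> y \<in> Z \<and> (x,y) \<in> E G) \<and>
   (\<forall>x\<in>(Z-A) \<inter> owned G a. \<sigma> x \<noteq> None) \<and> (\<forall>v\<in>Z. gp G A Z \<sigma> v)"

lemma ainv_init:
  assumes AU: "A \<subseteq> U" and up: "upd_A (subgame G U) a A A Map.empty \<sigma>0"
  shows "ainv G U A a A \<sigma>0"
proof -
  have "\<sigma>0 x = Some y \<Longrightarrow> x \<in> A \<inter> owned G a \<and> y \<in> A \<and> (x,y) \<in> E G" for x y
    using upd_A_some[OF up, of x y] by auto
  then show ?thesis unfolding ainv_def using AU by (auto intro: gp.base simp: dom_def)
qed

lemma ainv_step1:
  assumes disj: "V0 G \<inter> V1 G = {}"
    and inv: "ainv G U A a Z \<sigma>"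
    and ex: "\<exists>v w. v \<in> verts (subgame G U) - Z \<and> v \<in> owned (subgame G U) a \<and>
        w \<in> succs (subgame G U) v \<inter> Z \<and> Z' = insert v Z \<and>
        upd_A (subgame G U) a A Z' (\<sigma>(v \<mapsto> w)) \<sigma>'"
  shows "ainv G U A a Z' \<sigma>'"
proof -
  from ex obtain v w where v: "v \<in> verts (subgame G U) - Z" "v \<in> owned (subgame G U) a"
     "w \<in> succs (subgame G U) v \<inter> Z" and Z': "Z' = insert v Z"
     and up: "upd_A (subgame G U) a A Z' (\<sigma>(v \<mapsto> w)) \<sigma>'" by blast
  from inv have AZ: "A \<subseteq> Z" and ZU: "Z \<subseteq> U" and dom: "dom \<sigma> \<subseteq> Z \<inter> owned G a"
    and ed: "\<forall>x y. \<sigma> x = Some y \<longrightarrow> y \<in> Z \<and> (x,y) \<in> E G"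
    and nn: "\<forall>x\<in>(Z-A) \<inter> owned G a. \<sigma> x \<noteq> None" and gpZ: "\<forall>x\<in>Z. gp G A Z \<sigma> x"
    unfolding ainv_def by auto
  have vZ: "v \<notin> Z" "v \<in> U" "v \<notin> A" "v \<in> owned G a" using v AZ by auto
  have wZ: "w \<in> Z" "(v,w) \<in> E G" using v by auto
  have sv: "\<sigma>' v = Some w" using upd_A_out[OF up \<open>v \<notin> A\<close>] by simp
  have stab: "\<forall>x\<in>Z-A. \<sigma>' x = \<sigma> x" using upd_A_out[OF up] vZ by auto
  have d: "dom \<sigma>' \<subseteq> Z' \<inter> owned G a"
  proof
    fix x assume "x \<in> dom \<sigma>'"
    then obtain y where "\<sigma>' x = Some y" by auto
    from upd_A_some[OF up this] have "(\<sigma>(v \<mapsto> w)) x = Some y \<or> x \<in> A \<inter> owned G a" by auto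
    then show "x \<in> Z' \<inter> owned G a" using dom vZ Z' AZ by (auto simp: dom_def split: if_splits)
  qed
  have e: "\<forall>x y. \<sigma>' x = Some y \<longrightarrow> y \<in> Z' \<and> (x,y) \<in> E G"
  proof (intro allI impI)
    fix x y assume "\<sigma>' x = Some y"
    from upd_A_some[OF up this] show "y \<in> Z' \<and> (x,y) \<in> E G"
      using ed wZ Z' by (auto split: if_splits)
  qed
  have n: "\<forall>x\<in>(Z'-A) \<inter> owned G a. \<sigma>' x \<noteq> None"
    using nn stab sv Z' by auto
  have mono: "gp G A Z' \<sigma>' y" if "y \<in> Z" for y
    using gp_mono[OF _ _ stab] gpZ that Z' by blast
  have g: "\<forall>x\<in>Z'. gp G A Z' \<sigma>' x"
  proof
    fix x assume "x \<in> Z'"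
    show "gp G A Z' \<sigma>' x"
    proof (cases "x = v")
      case True
      have "gp G A Z' \<sigma>' v"
        by (rule gp.step[where w=w]) (use sv vZ Z' wZ mono[of w] in auto)
      then show ?thesis using True by simp
    next
      case False with \<open>x \<in> Z'\<close> Z' mono show ?thesis by auto
    qed
  qed
  show ?thesis unfolding ainv_def using AZ ZU vZ Z' d e n g by auto
qed

lemma ainv_step2:
  assumes disj: "V0 G \<inter> V1 G = {}"
    and succ: "\<forall>v\<in>U. \<exists>w\<in>U. (v,w) \<in> E G"
    and inv: "ainv G U A a Z \<sigma>"
    and ex: "\<exists>v. v \<in> verts (subgame G U) - Z \<and> v \<in> owned (subgame G U) (1 - a) \<and>
        succs (subgame G U) v \<subseteq> Z \<and> Z' = insert v Z \<and> upd_A (subgame G U) a A Z' \<sigma> \<sigma>'"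
  shows "ainv G U A a Z' \<sigma>'"
proof -
  from ex obtain v where v: "v \<in> verts (subgame G U) - Z" "v \<in> owned (subgame G U) (1 - a)"
     "succs (subgame G U) v \<subseteq> Z" and Z': "Z' = insert v Z"
     and up: "upd_A (subgame G U) a A Z' \<sigma> \<sigma>'" by blast
  from inv have AZ: "A \<subseteq> Z" and ZU: "Z \<subseteq> U" and dom: "dom \<sigma> \<subseteq> Z \<inter> owned G a"
    and ed: "\<forall>x y. \<sigma> x = Some y \<longrightarrow> y \<in> Z \<and> (x,y) \<in> E G"
    and nn: "\<forall>x\<in>(Z-A) \<inter> owned G a. \<sigma> x \<noteq> None" and gpZ: "\<forall>x\<in>Z. gp G A Z \<sigma> x"
    unfolding ainv_def by auto
  have vZ: "v \<notin> Z" "v \<in> U" "v \<notin> A" "v \<in> owned G (1 - a)" using v AZ by auto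
  have vna: "v \<notin> owned G a" using owned_disj[OF disj _ vZ(4)] by blast
  obtain w where wU: "w \<in> U" "(v,w) \<in> E G" using succ vZ by blast
  have wZ: "w \<in> Z" using v wU vZ by auto
  have sv: "\<sigma>' v = None" using upd_A_out[OF up \<open>v \<notin> A\<close>] dom vZ by (auto simp: dom_def)
  have stab: "\<forall>x\<in>Z-A. \<sigma>' x = \<sigma> x" using upd_A_out[OF up] by auto
  have d: "dom \<sigma>' \<subseteq> Z' \<inter> owned G a"
  proof
    fix x assume "x \<in> dom \<sigma>'"
    then obtain y where "\<sigma>' x = Some y" by auto
    from upd_A_some[OF up this] have "\<sigma> x = Some y \<or> x \<in> A \<inter> owned G a" by auto
    then show "x \<in> Z' \<inter> owned G a" using dom Z' AZ by (auto simp: dom_def)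
  qed
  have e: "\<forall>x y. \<sigma>' x = Some y \<longrightarrow> y \<in> Z' \<and> (x,y) \<in> E G"
  proof (intro allI impI)
    fix x y assume "\<sigma>' x = Some y"
    from upd_A_some[OF up this] show "y \<in> Z' \<and> (x,y) \<in> E G"
      using ed Z' by auto
  qed
  have n: "\<forall>x\<in>(Z'-A) \<inter> owned G a. \<sigma>' x \<noteq> None"
    using nn stab vna Z' by auto
  have mono: "gp G A Z' \<sigma>' y" if "y \<in> Z" for y
    using gp_mono[OF _ _ stab] gpZ that Z' by blast
  have g: "\<forall>x\<in>Z'. gp G A Z' \<sigma>' x"
  proof
    fix x assume "x \<in> Z'"
    show "gp G A Z' \<sigma>' x"
    proof (cases "x = v")
      case True
      have "gp G A Z' \<sigma>' v"
        by (rule gp.step[where w=w]) (use sv vZ Z' wU mono[OF wZ] in auto)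
      then show ?thesis using True by simp
    next
      case False with \<open>x \<in> Z'\<close> Z' mono show ?thesis by auto
    qed
  qed
  show ?thesis unfolding ainv_def using AZ ZU vZ Z' d e n g by auto
qed

lemma ainv_step3:
  assumes disj: "V0 G \<inter> V1 G = {}"
    and TT: "\<forall>t\<in>T'. tinv G t \<and> fst t \<subseteq> U"
    and inv: "ainv G U A a Z \<sigma>"
    and ex: "\<exists>t\<in>T'. tangle_winner (subgame G U) t = a \<and> \<not> fst t \<subseteq> Z \<and>
        escapes (subgame G U) t \<noteq> {} \<and> escapes (subgame G U) t \<subseteq> Z \<and> Z' = Z \<union> fst t \<and>
        upd_A (subgame G U) a A Z'
          (\<lambda>u. if u \<in> fst t \<inter> owned (subgame G U) a \<and> \<sigma> u = None then snd t u else \<sigma> u) \<sigma>'"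
  shows "ainv G U A a Z' \<sigma>'"
proof -
  from ex obtain t where tT: "t \<in> T'" and tw: "tangle_winner (subgame G U) t = a"
    and esc: "escapes (subgame G U) t \<noteq> {}" "escapes (subgame G U) t \<subseteq> Z" and Z': "Z' = Z \<union> fst t"
    and up: "upd_A (subgame G U) a A Z'
          (\<lambda>u. if u \<in> fst t \<inter> owned (subgame G U) a \<and> \<sigma> u = None then snd t u else \<sigma> u) \<sigma>'"
    by blast
  define \<tau> where "\<tau> = (\<lambda>u. if u \<in> fst t \<inter> owned (subgame G U) a \<and> \<sigma> u = None then snd t u else \<sigma> u)"
  have up': "upd_A (subgame G U) a A Z' \<tau> \<sigma>'" using up unfolding \<tau>_def .
  from TT tT have ti: "tinv G t" and tU: "fst t \<subseteq> U" by auto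
  have a: "prio G (fst t) mod 2 = a" using tw by simp
  from ti have sed: "\<forall>x y. snd t x = Some y \<longrightarrow> y \<in> fst t \<and> (x,y) \<in> E G"
    and sdom: "fst t \<inter> owned G a \<subseteq> dom (snd t)"
    and scc: "\<forall>u\<in>fst t. \<forall>w\<in>fst t. (u,w) \<in> (tedges G t)\<^sup>*" unfolding tinv_def a by auto
  from inv have AZ: "A \<subseteq> Z" and ZU: "Z \<subseteq> U" and dom: "dom \<sigma> \<subseteq> Z \<inter> owned G a"
    and ed: "\<forall>x y. \<sigma> x = Some y \<longrightarrow> y \<in> Z \<and> (x,y) \<in> E G"
    and nn: "\<forall>x\<in>(Z-A) \<inter> owned G a. \<sigma> x \<noteq> None" and gpZ: "\<forall>x\<in>Z. gp G A Z \<sigma> x"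
    unfolding ainv_def by auto
  have out: "\<sigma>' x = \<tau> x" if "x \<notin> Z" for x using upd_A_out[OF up'] that AZ by auto
  have sN: "\<sigma> x = None" if "x \<notin> Z" for x using that dom by (auto simp: dom_def)
  have \<tau>out: "\<tau> x = (if x \<in> owned G a then snd t x else None)" if "x \<notin> Z" "x \<in> fst t" for x
    using that sN[OF that(1)] tU unfolding \<tau>_def by auto
  have stab: "\<forall>x\<in>Z-A. \<sigma>' x = \<sigma> x"
  proof
    fix x assume x: "x \<in> Z - A"
    have "\<sigma> x = None \<longrightarrow> x \<notin> owned G a" using nn x by blast
    then show "\<sigma>' x = \<sigma> x" using upd_A_out[OF up'] x unfolding \<tau>_def by auto
  qed
  have d: "dom \<sigma>' \<subseteq> Z' \<inter> owned G a"
  proof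
    fix x assume "x \<in> dom \<sigma>'"
    then obtain y where "\<sigma>' x = Some y" by auto
    from upd_A_some[OF up' this] have "\<tau> x = Some y \<or> x \<in> A \<inter> owned G a" by auto
    then show "x \<in> Z' \<inter> owned G a" using dom Z' AZ unfolding \<tau>_def
      by (auto simp: dom_def split: if_splits)
  qed
  have e: "\<forall>x y. \<sigma>' x = Some y \<longrightarrow> y \<in> Z' \<and> (x,y) \<in> E G"
  proof (intro allI impI)
    fix x y assume "\<sigma>' x = Some y"
    from upd_A_some[OF up' this] show "y \<in> Z' \<and> (x,y) \<in> E G"
      using ed sed Z' unfolding \<tau>_def by (auto split: if_splits)
  qed
  have n: "\<forall>x\<in>(Z'-A) \<inter> owned G a. \<sigma>' x \<noteq> None"
  proof
    fix x assume x: "x \<in> (Z'-A) \<inter> owned G a"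
    show "\<sigma>' x \<noteq> None"
    proof (cases "x \<in> Z")
      case True then show ?thesis using stab nn x by auto
    next
      case False
      then have "x \<in> fst t" using x Z' by auto
      then have "\<sigma>' x = snd t x" using out[OF False] \<tau>out[OF False] x by auto
      then show ?thesis using sdom x \<open>x \<in> fst t\<close> by auto
    qed
  qed
  have mono: "gp G A Z' \<sigma>' y" if "y \<in> Z" for y
    using gp_mono[OF _ _ stab] gpZ that Z' by blast
  obtain e where "e \<in> escapes (subgame G U) t" using esc by blast
  then have "\<exists>u \<in> fst t \<inter> owned (subgame G U) (1 - tangle_winner (subgame G U) t). (u,e) \<in> E (subgame G U)"
    unfolding escapes_def by blast
  then obtain x where x: "x \<in> fst t \<inter> owned (subgame G U) (1 - a)" "(x,e) \<in> E (subgame G U)"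
    unfolding tw by blast
  have ex: "x \<in> fst t" "x \<in> owned G (1 - a)" "(x,e) \<in> E G" "e \<in> U" "x \<in> U"
    using x by auto
  have eZ: "e \<in> Z" using esc \<open>e \<in> escapes (subgame G U) t\<close> by blast
  have xna: "x \<notin> owned G a" using owned_disj[OF disj _ ex(2)] by blast
  have gpx: "gp G A Z' \<sigma>' x"
  proof (cases "x \<in> Z")
    case True then show ?thesis using mono by auto
  next
    case False
    have sx: "\<sigma>' x = None" using out[OF False] \<tau>out[OF False ex(1)] xna by simp
    have x1: "x \<in> Z'" using ex(1) Z' by simp
    have x2: "x \<notin> A" using False AZ by blast
    have x3: "\<forall>w'. \<sigma>' x = Some w' \<longrightarrow> w' = e" using sx by simp
    show ?thesis by (rule gp.step[OF x1 x2 ex(3) x3 mono[OF eZ]])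
  qed
  have gpt: "gp G A Z' \<sigma>' u" if "(u,x) \<in> (tedges G t)\<^sup>*" for u
    using that
  proof (induct rule: converse_rtrancl_induct)
    case base show ?case by (rule gpx)
  next
    case (step y z)
    from step(1) have yz: "(y,z) \<in> E G" "y \<in> fst t" "z \<in> fst t"
      "y \<in> owned G a \<longrightarrow> snd t y = Some z" by (auto simp: tedges_def a)
    show ?case
    proof (cases "y \<in> Z")
      case True then show ?thesis using mono by auto
    next
      case False
      have "\<sigma>' y = (if y \<in> owned G a then snd t y else None)"
        using out[OF False] \<tau>out[OF False yz(2)] by simp
      then have c: "\<forall>w'. \<sigma>' y = Some w' \<longrightarrow> w' = z" using yz by auto
      have y1: "y \<in> Z'" using yz(2) Z' by simp
      have y2: "y \<notin> A" using False AZ by blast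
      show ?thesis by (rule gp.step[OF y1 y2 yz(1) c step(3)])
    qed
  qed
  have g: "\<forall>x\<in>Z'. gp G A Z' \<sigma>' x"
  proof
    fix u assume "u \<in> Z'"
    show "gp G A Z' \<sigma>' u"
    proof (cases "u \<in> Z")
      case True then show ?thesis using mono by auto
    next
      case False
      then have "u \<in> fst t" using \<open>u \<in> Z'\<close> Z' by auto
      then have "(u,x) \<in> (tedges G t)\<^sup>*" using scc ex(1) by simp
      then show ?thesis by (rule gpt)
    qed
  qed
  show ?thesis unfolding ainv_def using AZ ZU tU Z' d e n g by auto
qed

lemma ainv_step:
  assumes disj: "V0 G \<inter> V1 G = {}"
    and succ: "\<forall>v\<in>U. \<exists>w\<in>U. (v,w) \<in> E G"
    and TT: "\<forall>t\<in>T'. tinv G t \<and> fst t \<subseteq> U"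
    and st: "tattr_step (subgame G U) T' a A s s'"
    and inv: "ainv G U A a (fst s) (snd s)"
  shows "ainv G U A a (fst s') (snd s')"
proof -
  obtain Z \<sigma> where s: "s = (Z,\<sigma>)" by (cases s)
  obtain Z' \<sigma>' where s': "s' = (Z',\<sigma>')" by (cases s')
  have inv': "ainv G U A a Z \<sigma>" using inv s by simp
  from st[unfolded tattr_step_def s s' Let_def prod.sel]
  have "ainv G U A a Z' \<sigma>'"
  proof (elim disjE)
    assume h: "\<exists>v w. v \<in> verts (subgame G U) - Z \<and> v \<in> owned (subgame G U) a \<and>
        w \<in> succs (subgame G U) v \<inter> Z \<and> Z' = insert v Z \<and>
        upd_A (subgame G U) a A Z' (\<sigma>(v \<mapsto> w)) \<sigma>'"
    show ?thesis by (rule ainv_step1[OF disj inv' h])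
  next
    assume h: "\<exists>v. v \<in> verts (subgame G U) - Z \<and> v \<in> owned (subgame G U) (1 - a) \<and>
        succs (subgame G U) v \<subseteq> Z \<and> Z' = insert v Z \<and> upd_A (subgame G U) a A Z' \<sigma> \<sigma>'"
    show ?thesis by (rule ainv_step2[OF disj succ inv' h])
  next
    assume h: "\<exists>t\<in>T'. tangle_winner (subgame G U) t = a \<and> \<not> fst t \<subseteq> Z \<and>
        escapes (subgame G U) t \<noteq> {} \<and> escapes (subgame G U) t \<subseteq> Z \<and> Z' = Z \<union> fst t \<and>
        upd_A (subgame G U) a A Z'
          (\<lambda>u. if u \<in> fst t \<inter> owned (subgame G U) a \<and> \<sigma> u = None then snd t u else \<sigma> u) \<sigma>'"
    show ?thesis by (rule ainv_step3[OF disj TT inv' h])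
  qed
  then show ?thesis using s' by simp
qed

lemma ainv_reach:
  assumes disj: "V0 G \<inter> V1 G = {}"
    and succ: "\<forall>v\<in>U. \<exists>w\<in>U. (v,w) \<in> E G"
    and TT: "\<forall>t\<in>T'. tinv G t \<and> fst t \<subseteq> U"
    and r: "(tattr_step (subgame G U) T' a A)\<^sup>*\<^sup>* s0 s"
    and i: "ainv G U A a (fst s0) (snd s0)"
  shows "ainv G U A a (fst s) (snd s)"
  using r i
proof (induct rule: rtranclp_induct)
  case base then show ?case by simp
next
  case (step y z) then show ?case using ainv_step[OF disj succ TT] by blast
qed

lemma ainv_result:
  assumes disj: "V0 G \<inter> V1 G = {}"
    and succ: "\<forall>v\<in>U. \<exists>w\<in>U. (v,w) \<in> E G"
    and TT: "\<forall>t\<in>T'. tinv G t \<and> fst t \<subseteq> U"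
    and AU: "A \<subseteq> U"
    and r: "tattr_result (subgame G U) T' a A Z \<sigma>"
  shows "ainv G U A a Z \<sigma>"
proof -
  from r obtain \<sigma>0 where up: "upd_A (subgame G U) a A A Map.empty \<sigma>0"
    and rr: "(tattr_step (subgame G U) T' a A)\<^sup>*\<^sup>* (A, \<sigma>0) (Z, \<sigma>)"
    unfolding tattr_result_def by blast
  have "ainv G U A a (fst (A,\<sigma>0)) (snd (A,\<sigma>0))" using ainv_init[OF AU up] by simp
  from ainv_reach[OF disj succ TT rr this] show ?thesis by simp
qed

lemma tangle_tinv:
  assumes disj: "V0 G \<inter> V1 G = {}" and t: "is_tangle G t"
  shows "tinv G t"
proof -
  obtain U \<sigma> where tt: "t = (U,\<sigma>)" by (cases t)
  define a where "a = prio G U mod 2"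
  from t have ed: "\<forall>u w. \<sigma> u = Some w \<longrightarrow> w \<in> U \<and> (u,w) \<in> E G" and dm: "dom \<sigma> = U \<inter> owned G a"
    and sc: "\<forall>u\<in>U. \<forall>w\<in>U. (u,w) \<in> (tangle_edges G U \<sigma> a)\<^sup>*"
    unfolding is_tangle_def tt Let_def a_def by auto
  have sub: "tangle_edges G U \<sigma> a \<subseteq> tedges G t"
  proof
    fix x assume "x \<in> tangle_edges G U \<sigma> a"
    then obtain u w where x: "x = (u,w)" and uw: "(u,w) \<in> E G"
      and c: "(u \<in> U \<inter> owned G a \<and> \<sigma> u = Some w) \<or> (u \<in> U \<inter> owned G (1 - a) \<and> w \<in> U)"
      unfolding tangle_edges_def by auto
    have "u \<in> owned G a \<longrightarrow> \<not> u \<in> owned G (1 - a)" using owned_disj[OF disj] by blast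
    then show "x \<in> tedges G t" using ed c uw unfolding tedges_def tt x a_def by auto
  qed
  have "\<forall>u\<in>U. \<forall>w\<in>U. (u,w) \<in> (tedges G t)\<^sup>*" using sc rtrancl_mono[OF sub] by blast
  then show ?thesis unfolding tinv_def using ed dm unfolding tt a_def by auto
qed

lemma extract_inv:
  assumes disj: "V0 G \<inter> V1 G = {}" and UV: "U \<subseteq> verts G" and fin: "finite U"
    and p: "p = prio G U" and A: "A = {v. pr G v = p} \<inter> U" and aa: "a = p mod 2"
    and inv: "ainv G U A a Z \<sigma>"
    and t: "t \<in> extract_tangles (subgame G U) a Z \<sigma>"
  shows "tinv G t"
proof -
  let ?G = "subgame G U"
  let ?CR = "closed_region ?G a Z \<sigma>"
  let ?H = "region_graph ?G a Z \<sigma>"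
  have "\<exists>C. t = (C, \<sigma> |` C) \<and> bottom_scc ?CR ?H C"
    using t by (simp only: extract_tangles_def mem_Collect_eq) blast
  then obtain C where tC: "t = (C, \<sigma> |` C)" and bs: "bottom_scc ?CR ?H C"
    by (elim exE conjE)
  have bs': "C \<noteq> {} \<and> C \<subseteq> ?CR \<and> (\<forall>u\<in>C. \<forall>w\<in>C. (u,w) \<in> ?H\<^sup>*) \<and>
     (\<forall>u \<in> C. \<forall>w \<in> ?CR. (u, w) \<in> ?H\<^sup>* \<and> (w, u) \<in> ?H\<^sup>* \<longrightarrow> w \<in> C) \<and>
     (\<forall>u\<in>C. \<forall>w. (u,w) \<in> ?H \<longrightarrow> w \<in> C)" using bs unfolding bottom_scc_def .
  have Cne: "C \<noteq> {}" using bs' by (rule conjunct1)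
  have CCR: "C \<subseteq> ?CR" using bs' by (elim conjE)
  have scc: "\<forall>u\<in>C. \<forall>w\<in>C. (u,w) \<in> ?H\<^sup>*" using bs' by (elim conjE)
  have bot: "\<forall>u\<in>C. \<forall>w. (u,w) \<in> ?H \<longrightarrow> w \<in> C" using bs' by (elim conjE)
  from inv have AZ: "A \<subseteq> Z" and ZU: "Z \<subseteq> U" and dom: "dom \<sigma> \<subseteq> Z \<inter> owned G a"
    and ed: "\<forall>x y. \<sigma> x = Some y \<longrightarrow> y \<in> Z \<and> (x,y) \<in> E G"
    and gpZ: "\<forall>x\<in>Z. gp G A Z \<sigma> x"
    unfolding ainv_def by auto
  define F where "F = (\<lambda>X. {v \<in> Z. (v \<in> owned ?G (1 - a) \<longrightarrow> succs ?G v \<subseteq> X) \<and>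
      (v \<in> owned ?G a \<longrightarrow> (\<exists>w. \<sigma> v = Some w \<and> w \<in> X))})"
  have mono: "mono F" unfolding F_def by (rule monoI) blast
  have CR: "?CR = F ?CR" unfolding closed_region_def F_def[symmetric] by (rule gfp_unfold[OF mono])
  have CRp: "x \<in> Z \<and> (x \<in> owned G a \<longrightarrow> (\<exists>w. \<sigma> x = Some w))" if "x \<in> ?CR" for x
  proof -
    have "x \<in> F ?CR" using that CR by simp
    then show ?thesis unfolding F_def using ZU by auto
  qed
  have CU: "C \<subseteq> U" using CCR CRp ZU by blast
  have Hedge: "(x,y) \<in> ?H" if "x \<in> C" "(x,y) \<in> E G" "y \<in> U" "\<forall>w'. \<sigma> x = Some w' \<longrightarrow> w' = y" for x y
  proof -
    have xU: "x \<in> U" using that CU by blast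
    have xCR: "x \<in> ?CR" using that CCR by blast
    have "x \<in> verts G" using xU UV by blast
    then consider "x \<in> owned G a" | "x \<in> owned G (1 - a)" using owned_cover[of x G a] by blast
    then show ?thesis
    proof cases
      case 1
      then obtain w where "\<sigma> x = Some w" using CRp[OF xCR] by blast
      then have "\<sigma> x = Some y" using that(4) by auto
      then show ?thesis unfolding region_graph_def using xCR 1 xU by auto
    next
      case 2
      then show ?thesis unfolding region_graph_def using xCR xU that by auto
    qed
  qed
  have reachA: "gp G A Z \<sigma> v \<Longrightarrow> v \<in> C \<Longrightarrow> \<exists>x\<in>C. x \<in> A" for v
  proof (induct rule: gp.induct)
    case (base v) then show ?case by blast
  next
    case (step v w)
    have "w \<in> U" using gp_Z[OF step.hyps(5)] ZU by blast
    then have "(v,w) \<in> ?H" using Hedge step by blast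
    then have "w \<in> C" using bot step by blast
    then show ?case using step.hyps(6) by blast
  qed
  obtain u where "u \<in> C" using Cne by blast
  then obtain x where xC: "x \<in> C" "x \<in> A" using reachA gpZ CRp CCR by blast
  have Cfin: "finite C" using CU fin finite_subset by blast
  have "Max (pr G ` C) = p"
  proof (rule Max_eqI)
    show "finite (pr G ` C)" using Cfin by simp
    show "p \<in> pr G ` C" using xC A by auto
    fix y assume "y \<in> pr G ` C"
    then obtain z where "z \<in> C" "y = pr G z" by blast
    then show "y \<le> p" unfolding p prio_def using CU fin by auto
  qed
  then have pC: "prio G C mod 2 = a" unfolding prio_def aa by simp
  have t1: "\<forall>x y. (\<sigma> |` C) x = Some y \<longrightarrow> y \<in> C \<and> (x,y) \<in> E G"
  proof (intro allI impI)
    fix x y assume h: "(\<sigma> |` C) x = Some y"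
    then have xC: "x \<in> C" and sx: "\<sigma> x = Some y" by (auto simp: restrict_map_def split: if_splits)
    have "y \<in> Z" "(x,y) \<in> E G" using ed sx by auto
    then have "(x,y) \<in> ?H" using Hedge[OF xC] sx ZU by auto
    then show "y \<in> C \<and> (x,y) \<in> E G" using bot xC \<open>(x,y) \<in> E G\<close> by blast
  qed
  have t2: "C \<inter> owned G a \<subseteq> dom (\<sigma> |` C)"
    using CRp CCR by (auto simp: dom_def restrict_map_def)
  have t3: "(u,w) \<in> ?H\<^sup>* \<Longrightarrow> u \<in> C \<Longrightarrow> w \<in> C \<and> (u,w) \<in> (tedges G t)\<^sup>*" for u w
  proof (induct rule: rtrancl_induct)
    case base then show ?case by simp
  next
    case (step y z)
    then have yC: "y \<in> C" and ut: "(u,y) \<in> (tedges G t)\<^sup>*" by auto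
    have zC: "z \<in> C" using bot yC step.hyps(2) by blast
    have yz: "(y,z) \<in> E G \<and> (y \<in> owned G a \<longrightarrow> \<sigma> y = Some z)"
    proof -
      from step.hyps(2) have "(y \<in> owned ?G a \<and> \<sigma> y = Some z) \<or> (y \<in> owned ?G (1 - a) \<and> (y,z) \<in> E ?G)"
        unfolding region_graph_def by blast
      then show ?thesis
      proof (elim disjE conjE)
        assume h: "y \<in> owned ?G a" "\<sigma> y = Some z"
        then show ?thesis using ed by simp
      next
        assume h: "y \<in> owned ?G (1 - a)" "(y,z) \<in> E ?G"
        then have "y \<notin> owned G a" using owned_disj[OF disj, of y a] unfolding owned_sub by blast
        then show ?thesis using h by simp
      qed
    qed
    have "(y,z) \<in> tedges G t" unfolding tedges_def tC using yz yC zC pC by auto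
    then show ?case using zC ut by auto
  qed
  have t4: "\<forall>u\<in>C. \<forall>w\<in>C. (u,w) \<in> (tedges G t)\<^sup>*"
  proof (intro ballI)
    fix u w assume "u \<in> C" "w \<in> C"
    then have "(u,w) \<in> ?H\<^sup>*" using scc by simp
    then show "(u,w) \<in> (tedges G t)\<^sup>*" using t3 \<open>u \<in> C\<close> by simp
  qed
  have ft: "fst t = C" "snd t = \<sigma> |` C" using tC by simp_all
  show ?thesis unfolding tinv_def ft pC by (rule conjI[OF t1 conjI[OF t2 t4]])
qed

definition sinv :: "'v game \<Rightarrow> 'v sstate \<Rightarrow> bool" where
 "sinv G s \<longleftrightarrow> (\<forall>t\<in>fst s \<union> snd (snd s). tinv G t) \<and>
   (\<forall>v\<in>verts G - dom (fst (snd s)). \<exists>w\<in>verts G - dom (fst (snd s)). (v,w) \<in> E G)"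

lemma sinv_step:
  assumes pg: "parity_game G" and si: "sinv G s" and st: "search_step G s s'"
  shows "sinv G s'"
proof -
  obtain T r Y where s: "s = (T,r,Y)" by (cases s) auto
  from pg have disj: "V0 G \<inter> V1 G = {}" and fin: "finite (verts G)"
    and succG: "\<forall>v\<in>verts G. \<exists>w. (v,w) \<in> E G" and EV: "E G \<subseteq> verts G \<times> verts G"
    unfolding parity_game_def by auto
  from si have tiT: "\<forall>t\<in>T \<union> Y. tinv G t"
    and succ0: "\<forall>v\<in>verts G - dom r. \<exists>w\<in>verts G - dom r. (v,w) \<in> E G"
    unfolding sinv_def s by auto
  define U where "U = verts G - dom r"
  have succ: "\<forall>v\<in>U. \<exists>w\<in>U. (v,w) \<in> E G" using succ0 unfolding U_def .
  have vU: "verts G \<inter> U = U" unfolding U_def by blast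
  have UV: "U \<subseteq> verts G" unfolding U_def by blast
  have finU: "finite U" using fin UV finite_subset by blast
  have cs: "(\<exists>Z \<sigma>. tattr_result (subgame G U) {t\<in>T. fst t \<subseteq> U} (prio G U mod 2)
        ({v. pr G v = prio G U} \<inter> U) Z \<sigma> \<and>
        s' = (T, (\<lambda>v. if v \<in> Z then Some (prio G U) else r v),
              Y \<union> extract_tangles (subgame G U) (prio G U mod 2) Z \<sigma>))
     \<or> s' = (T \<union> Y, Map.empty, {})"
    using st unfolding search_step_def s prod.case Let_def U_def[symmetric] verts_sub vU prio_sub
    by blast
  show ?thesis
  proof (cases "s' = (T \<union> Y, Map.empty, {})")
    case True
    have "\<forall>v\<in>verts G. \<exists>w\<in>verts G. (v,w) \<in> E G" using succG EV by blast
    then show ?thesis unfolding sinv_def True using tiT by simp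
  next
    case False
    with cs obtain Z \<sigma> where
      tr: "tattr_result (subgame G U) {t\<in>T. fst t \<subseteq> U} (prio G U mod 2) ({v. pr G v = prio G U} \<inter> U) Z \<sigma>"
      and s': "s' = (T, (\<lambda>v. if v \<in> Z then Some (prio G U) else r v),
              Y \<union> extract_tangles (subgame G U) (prio G U mod 2) Z \<sigma>)"
      by blast
    define p where "p = prio G U"
    define a where "a = p mod 2"
    define A where "A = {v. pr G v = p} \<inter> U"
    define T' where "T' = {t\<in>T. fst t \<subseteq> U}"
    have tr': "tattr_result (subgame G U) T' a A Z \<sigma>" using tr unfolding p_def a_def A_def T'_def .
    have TT: "\<forall>t\<in>T'. tinv G t \<and> fst t \<subseteq> U" using tiT unfolding T'_def by blast
    have AU: "A \<subseteq> U" unfolding A_def by blast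
    have inv: "ainv G U A a Z \<sigma>" by (rule ainv_result[OF disj succ TT AU tr'])
    have ext: "\<forall>t\<in>extract_tangles (subgame G U) a Z \<sigma>. tinv G t"
      using extract_inv[OF disj UV finU p_def A_def a_def inv] by blast
    have ZU: "Z \<subseteq> U" using inv unfolding ainv_def by blast
    from tr' have fin_st: "\<not> (\<exists>s'. tattr_step (subgame G U) T' a A (Z, \<sigma>) s')"
      unfolding tattr_result_def by blast
    have domr: "verts G - dom (\<lambda>v. if v \<in> Z then Some p else r v) = U - Z"
      unfolding U_def by (auto simp: dom_def)
    have succ': "\<forall>v\<in>U - Z. \<exists>w\<in>U - Z. (v,w) \<in> E G"
    proof
      fix v assume vUZ: "v \<in> U - Z"
      obtain w where wU: "w \<in> U" "(v,w) \<in> E G" using succ vUZ by blast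
      have "v \<in> verts G" using vUZ UV by blast
      then consider "v \<in> owned G a" | "v \<in> owned G (1 - a)" using owned_cover[of v G a] by blast
      then show "\<exists>w\<in>U - Z. (v,w) \<in> E G"
      proof cases
        case 1
        show ?thesis
        proof (cases "w \<in> Z")
          case True
          obtain \<sigma>' where up: "upd_A (subgame G U) a A (insert v Z) (\<sigma>(v \<mapsto> w)) \<sigma>'"
            using upd_A_ex by blast
          have c1: "v \<in> verts (subgame G U) - Z" using vUZ vU by simp
          have c2: "v \<in> owned (subgame G U) a" using 1 vUZ by simp
          have c3: "w \<in> succs (subgame G U) v \<inter> Z" using wU vUZ True by simp
          have "tattr_step (subgame G U) T' a A (Z, \<sigma>) (insert v Z, \<sigma>')"
            unfolding tattr_step_def Let_def prod.sel
            by (rule disjI1, rule exI[of _ v], rule exI[of _ w]) (use c1 c2 c3 up in blast)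
          then show ?thesis using fin_st by blast
        next
          case False then show ?thesis using wU by blast
        qed
      next
        case 2
        show ?thesis
        proof (rule ccontr)
          assume nex: "\<not> (\<exists>w\<in>U - Z. (v,w) \<in> E G)"
          obtain \<sigma>' where up: "upd_A (subgame G U) a A (insert v Z) \<sigma> \<sigma>'"
            using upd_A_ex by blast
          have c1: "v \<in> verts (subgame G U) - Z" using vUZ vU by simp
          have c2: "v \<in> owned (subgame G U) (1 - a)" using 2 vUZ unfolding owned_sub by blast
          have c3: "succs (subgame G U) v \<subseteq> Z" using nex unfolding succs_sub by blast
          have "tattr_step (subgame G U) T' a A (Z, \<sigma>) (insert v Z, \<sigma>')"
            unfolding tattr_step_def Let_def prod.sel
            by (rule disjI2, rule disjI1, rule exI[of _ v]) (use c1 c2 c3 up in blast)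
          then show False using fin_st by blast
        qed
      qed
    qed
    have "\<forall>t\<in>T \<union> (Y \<union> extract_tangles (subgame G U) a Z \<sigma>). tinv G t" using tiT ext by blast
    then show ?thesis unfolding sinv_def s' using succ' domr unfolding p_def a_def by simp
  qed
qed

lemma sinv_reach:
  assumes pg: "parity_game G" and r: "(search_step G)\<^sup>*\<^sup>* s0 s" and i: "sinv G s0"
  shows "sinv G s"
  using r i
proof (induct rule: rtranclp_induct)
  case base then show ?case by simp
next
  case (step y z) then show ?case using sinv_step[OF pg] by blast
qed

theorem lemma3:
  fixes G :: "'v game" and T0 T Y :: "'v tangle set" and r :: "'v \<rightharpoonup> nat"
    and Z :: "'v set" and \<sigma> :: "'v \<rightharpoonup> 'v"
  assumes "parity_game G"
    and "\<forall>t \<in> T0. is_tangle G t"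
    and "(search_step G)\<^sup>*\<^sup>* (T0, Map.empty, {}) (T, r, Y)"
    and "verts G - dom r \<noteq> {}"
    and "tattr_result (subgame G (verts G - dom r))
           {t \<in> T. fst t \<subseteq> verts G - dom r}
           (prio G (verts G - dom r) mod 2)
           ({v. pr G v = prio G (verts G - dom r)} \<inter> (verts G - dom r)) Z \<sigma>"
  shows "\<forall>v \<in> Z. \<exists>path. path \<noteq> [] \<and> hd path = v \<and>
           pr G (last path) = prio G (verts G - dom r) \<and> set path \<subseteq> Z \<and>
           (\<forall>i < length path - 1.
              (path ! i, path ! Suc i) \<in> E (subgame G (verts G - dom r)) \<and>
              (\<forall>w. \<sigma> (path ! i) = Some w \<longrightarrow> path ! Suc i = w))"
proof -
  note pg = assms(1)
  let ?U = "verts G - dom r"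
  let ?A = "{v. pr G v = prio G ?U} \<inter> ?U"
  from pg have disj: "V0 G \<inter> V1 G = {}" and succG: "\<forall>v\<in>verts G. \<exists>w. (v,w) \<in> E G"
    and EV: "E G \<subseteq> verts G \<times> verts G"
    unfolding parity_game_def by auto
  have ti0: "\<forall>t\<in>T0. tinv G t" using assms(2) tangle_tinv[OF disj] by blast
  have "\<forall>v\<in>verts G. \<exists>w\<in>verts G. (v,w) \<in> E G" using succG EV by blast
  then have "sinv G (T0, Map.empty, {})" unfolding sinv_def using ti0 by simp
  then have si: "sinv G (T, r, Y)" by (rule sinv_reach[OF pg assms(3)])
  then have tiT: "\<forall>t\<in>T. tinv G t" and succ: "\<forall>v\<in>?U. \<exists>w\<in>?U. (v,w) \<in> E G"
    unfolding sinv_def by auto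
  have TT: "\<forall>t\<in>{t \<in> T. fst t \<subseteq> ?U}. tinv G t \<and> fst t \<subseteq> ?U" using tiT by blast
  have AU: "?A \<subseteq> ?U" by blast
  have inv: "ainv G ?U ?A (prio G ?U mod 2) Z \<sigma>"
    by (rule ainv_result[OF disj succ TT AU assms(5)])
  then have ZU: "Z \<subseteq> ?U" and gpZ: "\<forall>v\<in>Z. gp G ?A Z \<sigma> v" unfolding ainv_def by auto
  show ?thesis
  proof
    fix v assume "v \<in> Z"
    then have "gp G ?A Z \<sigma> v" using gpZ by blast
    from gp_list[OF this] obtain path where p: "path \<noteq> []" "hd path = v" "last path \<in> ?A"
      "set path \<subseteq> Z"
      "\<forall>i<length path - 1. (path!i, path!Suc i) \<in> E G \<and> (\<forall>w. \<sigma> (path!i) = Some w \<longrightarrow> path!Suc i = w)"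
      by blast
    have e: "\<forall>i<length path - 1. (path!i, path!Suc i) \<in> E (subgame G ?U) \<and>
        (\<forall>w. \<sigma> (path!i) = Some w \<longrightarrow> path!Suc i = w)"
    proof (intro allI impI)
      fix i assume i: "i < length path - 1"
      have "path ! i \<in> set path" "path ! Suc i \<in> set path" using i by auto
      then have "path ! i \<in> ?U" "path ! Suc i \<in> ?U" using p(4) ZU by blast+
      then show "(path!i, path!Suc i) \<in> E (subgame G ?U) \<and>
        (\<forall>w. \<sigma> (path!i) = Some w \<longrightarrow> path!Suc i = w)" using p(5) i by simp
    qed
    have "pr G (last path) = prio G ?U" using p(3) by blast
    then show "\<exists>path. path \<noteq> [] \<and> hd path = v \<and>
           pr G (last path) = prio G ?U \<and> set path \<subseteq> Z \<and>
           (\<forall>i < length path - 1.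
              (path ! i, path ! Suc i) \<in> E (subgame G ?U) \<and>
              (\<forall>w. \<sigma> (path ! i) = Some w \<longrightarrow> path ! Suc i = w))"
      using p(1,2,4) e by blast
  qed
qed

end
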